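(* Let $k\in\{1,2,\dots\}\cup\{\infty\}$ and $a,b>0$ with $a,b\neq1$. Then $D^k(\mathbb{R},0)\cap w_b\,D^k(\mathbb{R},0)\,w_a$ equals $\varnothing$ if $a\neq b$ and $a\neq 1/b$; equals $E^{k,+}(\mathbb{R},0)$ if $ab=1$; and equals $E^{k,-}(\mathbb{R},0)$ if $a=b$.
   Context: $D^k(\mathbb{R},0)$ is the group of $C^k$-diffeomorphisms of $\mathbb{R}$ fixing $0$. $E^k(\mathbb{R},0)$ is its subgroup of $h$ with $h^{(i)}(0)=0$ for all integers $2\le i\le k$ (all $i\ge2$ if $k=\infty$); $E^{k,+}(\mathbb{R},0)$ and $E^{k,-}(\mathbb{R},0)$ denote its orientation preserving and orientation reversing elements. For $c>0$, $w_c\colon\mathbb{R}\to\mathbb{R}$ is the homeomorphism $w_c(x)=x$ for $x\le0$, $w_c(x)=cx$ for $x>0$, and $w_bDw_a=\{w_b\circ f\circ w_a: f\in D^k(\mathbb{R},0)\}$. *)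

theory Defs
  imports "HOL-Analysis.Analysis" "HOL-Library.Extended_Nat"
begin

definition Ck :: "enat \<Rightarrow> (real \<Rightarrow> real) \<Rightarrow> bool" where
  "Ck k f \<longleftrightarrow>
     (\<forall>n::nat. enat n < k \<longrightarrow> (\<forall>x. ((deriv ^^ n) f) differentiable (at x))) \<and>
     (\<forall>n::nat. enat n \<le> k \<longrightarrow> continuous_on UNIV ((deriv ^^ n) f))"

definition Dk :: "enat \<Rightarrow> (real \<Rightarrow> real) set" where
  "Dk k = {f. bij f \<and> Ck k f \<and> Ck k (inv f) \<and> f 0 = 0}"

definition Ek :: "enat \<Rightarrow> (real \<Rightarrow> real) set" where
  "Ek k = {h \<in> Dk k. \<forall>i::nat. 2 \<le> i \<and> enat i \<le> k \<longrightarrow> (deriv ^^ i) h 0 = 0}"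

definition Ek_plus :: "enat \<Rightarrow> (real \<Rightarrow> real) set" where
  "Ek_plus k = {h \<in> Ek k. strict_mono h}"

definition Ek_minus :: "enat \<Rightarrow> (real \<Rightarrow> real) set" where
  "Ek_minus k = {h \<in> Ek k. \<forall>x y. x < y \<longrightarrow> h y < h x}"

definition w :: "real \<Rightarrow> real \<Rightarrow> real" where
  "w c x = (if x \<le> 0 then x else c * x)"

definition wDw :: "enat \<Rightarrow> real \<Rightarrow> real \<Rightarrow> (real \<Rightarrow> real) set" where
  "wDw k b a = {w b \<circ> f \<circ> w a | f. f \<in> Dk k}"

end

theory Submission
  imports Defs
begin

fun Cn :: "nat \<Rightarrow> (real \<Rightarrow> real) \<Rightarrow> bool" where
  "Cn 0 f = continuous_on UNIV f"
| "Cn (Suc n) f = ((\<forall>x. f differentiable at x) \<and> Cn n (deriv f))"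

lemma funpow_deriv: "(deriv ^^ Suc m) f = (deriv ^^ m) (deriv f)"
  by (simp add: funpow_Suc_right del: funpow.simps)

lemma diff_cont: "\<forall>x. f differentiable at x \<Longrightarrow> continuous_on UNIV (f::real\<Rightarrow>real)"
  using differentiable_imp_continuous_within continuous_at_imp_continuous_on by blast

lemma Cn_iff: "Cn n f \<longleftrightarrow> (\<forall>m<n. \<forall>x. (deriv ^^ m) f differentiable at x) \<and> (\<forall>m\<le>n. continuous_on UNIV ((deriv ^^ m) f))"
proof (induction n arbitrary: f)
  case 0
  then show ?case by simp
next
  case (Suc n)
  show ?case
  proof
    assume A: "Cn (Suc n) f"
    then have d: "\<forall>x. f differentiable at x" and B: "Cn n (deriv f)" by auto
    from B Suc have B1: "\<forall>m<n. \<forall>x. (deriv ^^ Suc m) f differentiable at x"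
       and B2: "\<forall>m\<le>n. continuous_on UNIV ((deriv ^^ Suc m) f)"
      by (auto simp only: funpow_deriv)
    show "(\<forall>m<Suc n. \<forall>x. (deriv ^^ m) f differentiable at x) \<and> (\<forall>m\<le>Suc n. continuous_on UNIV ((deriv ^^ m) f))"
    proof (intro conjI allI impI)
      fix m x assume "m < Suc n" then show "(deriv ^^ m) f differentiable at x"
        using B1 d by (cases m) auto
    next
      fix m assume "m \<le> Suc n" then show "continuous_on UNIV ((deriv ^^ m) f)"
        using B2 d diff_cont by (cases m) auto
    qed
  next
    assume A: "(\<forall>m<Suc n. \<forall>x. (deriv ^^ m) f differentiable at x) \<and> (\<forall>m\<le>Suc n. continuous_on UNIV ((deriv ^^ m) f))"
    then have d: "\<forall>x. f differentiable at x"
      by (metis funpow_0 zero_less_Suc)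
    have "Cn n (deriv f)" unfolding Suc.IH
    proof (intro conjI allI impI)
      fix m x assume "m < n" then show "(deriv ^^ m) (deriv f) differentiable at x"
        using A by (metis Suc_mono funpow_deriv)
    next
      fix m assume "m \<le> n" then show "continuous_on UNIV ((deriv ^^ m) (deriv f))"
        using A by (metis Suc_le_mono funpow_deriv)
    qed
    then show "Cn (Suc n) f" using d by simp
  qed
qed

lemma Ck_iff: "Ck k f \<longleftrightarrow> (\<forall>n. enat n \<le> k \<longrightarrow> Cn n f)"
proof
  assume "Ck k f"
  then have A: "\<forall>n. enat n < k \<longrightarrow> (\<forall>x. (deriv ^^ n) f differentiable at x)"
    and B: "\<forall>n. enat n \<le> k \<longrightarrow> continuous_on UNIV ((deriv ^^ n) f)"
    unfolding Ck_def by auto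
  show "\<forall>n. enat n \<le> k \<longrightarrow> Cn n f"
  proof (intro allI impI)
    fix n assume n: "enat n \<le> k"
    show "Cn n f" unfolding Cn_iff
    proof (intro conjI allI impI)
      fix m x assume "m < n"
      then have "enat m < k" using n by (meson enat_ord_simps(2) less_le_trans)
      then show "(deriv ^^ m) f differentiable at x" using A by blast
    next
      fix m assume "m \<le> n"
      then have "enat m \<le> k" using n by (meson enat_ord_simps(1) order_trans)
      then show "continuous_on UNIV ((deriv ^^ m) f)" using B by blast
    qed
  qed
next
  assume C: "\<forall>n. enat n \<le> k \<longrightarrow> Cn n f"
  show "Ck k f" unfolding Ck_def
  proof (intro conjI allI impI)
    fix n x assume "enat n < k"
    then have "enat (Suc n) \<le> k" by (simp only: Suc_ile_eq)
    then have "Cn (Suc n) f" using C by blast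
    then show "(deriv ^^ n) f differentiable at x" unfolding Cn_iff by blast
  next
    fix n assume "enat n \<le> k"
    then have "Cn n f" using C by blast
    then show "continuous_on UNIV ((deriv ^^ n) f)" unfolding Cn_iff by blast
  qed
qed

lemma Cn_le: "m \<le> n \<Longrightarrow> Cn n f \<Longrightarrow> Cn m f"
  unfolding Cn_iff by auto

lemma Cn_deriv: "Cn (Suc n) f \<Longrightarrow> Cn n (deriv f)" by simp

lemma deriv_at: "f differentiable at x \<Longrightarrow> (f has_real_derivative deriv f x) (at x)"
  using DERIV_deriv_iff_real_differentiable by blast

lemma DERIV_diff: "(f has_real_derivative D) (at x) \<Longrightarrow> f differentiable at x"
  using real_differentiable_def by blast

lemma Cn_const: "Cn n (\<lambda>x. c)"
proof (induction n arbitrary: c)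
  case 0 then show ?case by simp
next
  case (Suc n)
  have "deriv (\<lambda>x. c) = (\<lambda>x. 0)" by (rule ext) simp
  then show ?case using Suc by simp
qed

lemma Cn_lin: "Cn n (\<lambda>x. e * x)"
proof (cases n)
  case 0 then show ?thesis by (simp add: continuous_on_mult_left)
next
  case (Suc m)
  have "deriv (\<lambda>x. e * x) = (\<lambda>x. e)" by (rule ext) (rule DERIV_imp_deriv, auto intro!: derivative_eq_intros)
  then show ?thesis using Suc Cn_const by simp
qed

lemma Cn_add: "Cn n f \<Longrightarrow> Cn n g \<Longrightarrow> Cn n (\<lambda>x. f x + g x)"
proof (induction n arbitrary: f g)
  case 0 then show ?case by (simp add: continuous_on_add)
next
  case (Suc n)
  have "deriv (\<lambda>x. f x + g x) = (\<lambda>x. deriv f x + deriv g x)"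
    using Suc.prems by (intro ext DERIV_imp_deriv) (auto intro!: derivative_eq_intros deriv_at)
  then show ?case using Suc by auto
qed

lemma Cn_mult: "Cn n f \<Longrightarrow> Cn n g \<Longrightarrow> Cn n (\<lambda>x. f x * g x)"
proof (induction n arbitrary: f g)
  case 0 then show ?case by (simp add: continuous_on_mult)
next
  case (Suc n)
  have "deriv (\<lambda>x. f x * g x) = (\<lambda>x. deriv f x * g x + f x * deriv g x)"
    using Suc.prems by (intro ext DERIV_imp_deriv) (auto intro!: derivative_eq_intros deriv_at)
  moreover have "Cn n f" "Cn n g" using Suc.prems Cn_le le_SucI by blast+
  ultimately show ?case using Suc by (auto intro!: Cn_add)
qed

lemma Cn_comp: "Cn n f \<Longrightarrow> Cn n g \<Longrightarrow> Cn n (\<lambda>x. f (g x))"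
proof (induction n arbitrary: f g)
  case 0 then show ?case
    by simp (metis continuous_on_compose2 subset_UNIV)
next
  case (Suc n)
  have "deriv (\<lambda>x. f (g x)) = (\<lambda>x. deriv f (g x) * deriv g x)"
    using Suc.prems by (intro ext DERIV_imp_deriv DERIV_chain2[OF deriv_at deriv_at]) auto
  moreover have "Cn n g" using Suc.prems Cn_le le_SucI by blast+
  moreover have "\<forall>x. (\<lambda>x. f (g x)) differentiable at x"
  proof
    fix x
    have "DERIV (\<lambda>x. f (g x)) x :> deriv f (g x) * deriv g x"
      using Suc.prems by (intro DERIV_chain2[OF deriv_at deriv_at]) auto
    then show "(\<lambda>x. f (g x)) differentiable at x" by (rule DERIV_diff)
  qed
  ultimately show ?case using Suc by (auto intro!: Cn_mult)
qed

lemma Cn_inverse: "Cn n g \<Longrightarrow> \<forall>x. g x \<noteq> 0 \<Longrightarrow> Cn n (\<lambda>x. 1 / g x)"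
proof (induction n arbitrary: g)
  case 0 then show ?case by (simp add: continuous_on_divide)
next
  case (Suc n)
  have eq: "deriv (\<lambda>x. 1 / g x) = (\<lambda>x. ((-1) * deriv g x) * ((1 / g x) * (1 / g x)))"
    using Suc.prems by (intro ext DERIV_imp_deriv) (auto intro!: derivative_eq_intros deriv_at simp: power2_eq_square)
  have "Cn n g" using Suc.prems Cn_le le_SucI by blast+
  then have "Cn n (\<lambda>x. ((-1) * deriv g x) * ((1 / g x) * (1 / g x)))"
    using Suc by (intro Cn_mult Cn_const) auto
  moreover have "\<forall>x. (\<lambda>x. 1 / g x) differentiable at x"
    using Suc.prems by (auto intro!: derivative_intros)
  ultimately show ?case unfolding Cn.simps eq by blast
qed

lemma deriv_nonzero:
  fixes f u :: "real \<Rightarrow> real"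
  assumes "\<forall>x. u (f x) = x" "f differentiable at x" "u differentiable at (f x)"
  shows "deriv f x \<noteq> 0"
proof -
  have "DERIV (\<lambda>x. u (f x)) x :> deriv u (f x) * deriv f x"
    using DERIV_chain2[OF deriv_at[OF assms(3)] deriv_at[OF assms(2)]] .
  moreover have "(\<lambda>x. u (f x)) = (\<lambda>x. x)" using assms by auto
  then have "DERIV (\<lambda>x. u (f x)) x :> 1" by simp
  ultimately have "deriv u (f x) * deriv f x = 1"
    by (rule DERIV_unique)
  then show ?thesis by auto
qed

lemma Cn_inv:
  assumes f: "Cn (Suc n) f" and uf: "\<forall>x. u (f x) = x" and fu: "\<forall>y. f (u y) = y"
    and uc: "continuous_on UNIV u" and nz: "\<forall>x. deriv f x \<noteq> 0"
  shows "Cn (Suc n) u"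
proof -
  have f1: "Cn (Suc 0) f" by (rule Cn_le[OF _ f]) simp
  have du: "DERIV u y :> inverse (deriv f (u y))" for y
  proof (rule DERIV_inverse_function[where a="y - 1" and b="y + 1"])
    show "DERIV f (u y) :> deriv f (u y)" using f1 by (auto intro: deriv_at)
    show "isCont u y" using uc by (simp add: continuous_on_eq_continuous_at)
  qed (use nz fu in auto)
  then have d: "\<forall>y. u differentiable at y" using DERIV_diff by blast
  have dd: "deriv u = (\<lambda>y. 1 / deriv f (u y))"
    using du by (intro ext DERIV_imp_deriv) (simp add: inverse_eq_divide)
  have "m \<le> n \<Longrightarrow> Cn (Suc m) u" for m
  proof (induction m)
    case 0
    have "Cn 0 (\<lambda>y. 1 / deriv f (u y))"
    proof (rule Cn_inverse)
      show "Cn 0 (\<lambda>y. deriv f (u y))" by (rule Cn_comp[of 0 "deriv f" u]) (use f1 uc in auto)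
    qed (use nz in auto)
    then show ?case using d dd by simp
  next
    case (Suc m)
    have "Cn (Suc (Suc m)) f" by (rule Cn_le[OF _ f]) (use Suc.prems in simp)
    then have dfm: "Cn (Suc m) (deriv f)" by simp
    have "Cn (Suc m) (\<lambda>y. 1 / deriv f (u y))"
    proof (rule Cn_inverse)
      show "Cn (Suc m) (\<lambda>y. deriv f (u y))" by (rule Cn_comp[of "Suc m" "deriv f" u]) (use Suc dfm in auto)
    qed (use nz in auto)
    then show ?case using d dd by simp
  qed
  then show ?thesis by blast
qed

lemma deriv_scale:
  fixes u :: "real \<Rightarrow> real"
  assumes "\<forall>j<m. \<forall>x. (deriv ^^ j) u differentiable at x"
  shows "(deriv ^^ m) (\<lambda>x. c * u (e * x)) = (\<lambda>x. c * e ^ m * (deriv ^^ m) u (e * x))"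
  using assms
proof (induction m)
  case 0 then show ?case by simp
next
  case (Suc m)
  have IH: "(deriv ^^ m) (\<lambda>x. c * u (e * x)) = (\<lambda>x. c * e ^ m * (deriv ^^ m) u (e * x))"
    using Suc by auto
  have dm: "\<forall>x. (deriv ^^ m) u differentiable at x" using Suc.prems by auto
  have "deriv (\<lambda>x. c * e ^ m * (deriv ^^ m) u (e * x)) = (\<lambda>x. c * e ^ Suc m * (deriv ^^ Suc m) u (e * x))"
  proof (rule ext, rule DERIV_imp_deriv)
    fix x
    have "DERIV (\<lambda>x. (deriv ^^ m) u (e * x)) x :> deriv ((deriv ^^ m) u) (e * x) * e"
      by (rule DERIV_chain2[OF deriv_at[OF dm[rule_format]] DERIV_cmult_Id])
    then have "DERIV (\<lambda>x. c * e ^ m * (deriv ^^ m) u (e * x)) x :> c * e ^ m * (deriv ((deriv ^^ m) u) (e * x) * e)"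
      by (rule DERIV_cmult)
    then show "DERIV (\<lambda>x. c * e ^ m * (deriv ^^ m) u (e * x)) x :> c * e ^ Suc m * (deriv ^^ Suc m) u (e * x)"
      by (simp add: algebra_simps)
  qed
  then show ?case using IH by simp
qed

lemma deriv_local:
  assumes "open S" "\<forall>x\<in>S. g x = h x" "x \<in> S"
  shows "(deriv ^^ m) g x = (deriv ^^ m) h x"
  using assms(3)
proof (induction m arbitrary: x)
  case 0 then show ?case using assms by simp
next
  case (Suc m)
  have "eventually (\<lambda>y. (deriv ^^ m) g y = (deriv ^^ m) h y) (nhds x)"
    using eventually_nhds_in_open[OF assms(1) Suc.prems] by (rule eventually_mono) (rule Suc.IH)
  then have "deriv ((deriv ^^ m) g) x = deriv ((deriv ^^ m) h) x" by (rule deriv_cong_ev) simp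
  then show ?case by simp
qed

lemma glue:
  assumes "Cn n p" "Cn n q" "\<forall>m\<le>n. (deriv ^^ m) p 0 = (deriv ^^ m) q 0"
  shows "Cn n (\<lambda>x. if x \<le> 0 then p x else q x)"
  using assms
proof (induction n arbitrary: p q)
  case 0
  then show ?case
    by simp (intro continuous_on_cases_le[where S=UNIV and h="\<lambda>x. x", simplified]; auto intro: continuous_on_subset)
next
  case (Suc n)
  have p1: "\<forall>x. p differentiable at x" and q1: "\<forall>x. q differentiable at x"
    using Suc.prems by auto
  have "((\<lambda>x. if x \<le> 0 then p x else q x) has_real_derivative (if x \<le> 0 then deriv p x else deriv q x)) (at x)" for x
  proof -
    have "((\<lambda>x. if x \<in> {..0} then p x else q x) has_derivative
       (if x \<in> {..0} then (*) (deriv p x) else (*) (deriv q x))) (at x within ({..0} \<union> {0<..}))"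
    proof (rule has_derivative_If_within_closures)
      show "(p has_derivative (*) (deriv p x)) (at x within {..0} \<union> (closure {..0} \<inter> closure {0<..}))"
        using p1 deriv_at has_field_derivative_def has_derivative_at_withinI by blast
      show "(q has_derivative (*) (deriv q x)) (at x within {0<..} \<union> (closure {..0} \<inter> closure {0<..}))"
        using q1 deriv_at has_field_derivative_def has_derivative_at_withinI by blast
      show "x \<in> closure {..0} \<Longrightarrow> x \<in> closure {0<..} \<Longrightarrow> p x = q x"
        using Suc.prems(3) closure_closed[OF closed_atMost, of "0::real"]
        by (metis atLeast_iff atMost_iff closure_greaterThan funpow_0 order_antisym zero_le)
      show "x \<in> closure {..0} \<Longrightarrow> x \<in> closure {0<..} \<Longrightarrow> (*) (deriv p x) = (*) (deriv q x)"
        using Suc.prems(3)[rule_format, of 1] by simp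
    qed auto
    moreover have "{..0} \<union> {0<..} = (UNIV::real set)" by auto
    moreover have "(\<lambda>x. if x \<in> {..0} then p x else q x) = (\<lambda>x. if x \<le> 0 then p x else q x)" by auto
    moreover have "(if x \<in> {..0} then (*) (deriv p x) else (*) (deriv q x)) = (*) (if x \<le> 0 then deriv p x else deriv q x)"
      by auto
    ultimately show ?thesis by (simp add: has_field_derivative_def)
  qed
  then have d: "\<forall>x. (\<lambda>x. if x \<le> 0 then p x else q x) differentiable at x"
    using DERIV_diff by blast
  have dd: "deriv (\<lambda>x. if x \<le> 0 then p x else q x) = (\<lambda>x. if x \<le> 0 then deriv p x else deriv q x)"
    by (intro ext DERIV_imp_deriv) fact
  have "Cn n (\<lambda>x. if x \<le> 0 then deriv p x else deriv q x)"
  proof (rule Suc.IH)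
    show "Cn n (deriv p)" "Cn n (deriv q)" using Suc.prems by auto
    show "\<forall>m\<le>n. (deriv ^^ m) (deriv p) 0 = (deriv ^^ m) (deriv q) 0"
      using Suc.prems(3) by (metis Suc_le_mono funpow_deriv)
  qed
  then show ?case using d dd by simp
qed

lemma side_left:
  assumes f: "Cn m f" and h: "continuous_on UNIV ((deriv ^^ m) h)" and e: "e > 0"
    and eq: "\<forall>x<0. h x = c * f (e * x)"
  shows "(deriv ^^ m) h 0 = c * e ^ m * (deriv ^^ m) f 0"
proof -
  have fd: "\<forall>j<m. \<forall>x. (deriv ^^ j) f differentiable at x" and fc: "continuous_on UNIV ((deriv ^^ m) f)"
    using f unfolding Cn_iff by auto
  have eqm: "(deriv ^^ m) h x = c * e ^ m * (deriv ^^ m) f (e * x)" if "x < 0" for x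
  proof -
    have "(deriv ^^ m) h x = (deriv ^^ m) (\<lambda>x. c * f (e * x)) x"
      using eq that by (intro deriv_local[where S="{..<0}"]) auto
    then show ?thesis using deriv_scale[OF fd] by simp
  qed
  have "((deriv ^^ m) h \<longlongrightarrow> (deriv ^^ m) h 0) (at 0)"
    using h by (simp add: continuous_on_eq_continuous_at isContD)
  then have l1: "((deriv ^^ m) h \<longlongrightarrow> (deriv ^^ m) h 0) (at_left 0)"
    using filterlim_at_split by blast
  have "continuous_on UNIV (\<lambda>x. c * e ^ m * (deriv ^^ m) f (e * x))"
    using fc by (intro continuous_intros continuous_on_compose2[OF fc]) auto
  then have "((\<lambda>x. c * e ^ m * (deriv ^^ m) f (e * x)) \<longlongrightarrow> c * e ^ m * (deriv ^^ m) f 0) (at 0)"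
    by (metis (no_types, lifting) UNIV_I continuous_on_def mult_zero_right tendsto_within_open open_UNIV)
  then have "((\<lambda>x. c * e ^ m * (deriv ^^ m) f (e * x)) \<longlongrightarrow> c * e ^ m * (deriv ^^ m) f 0) (at_left 0)"
    using filterlim_at_split by blast
  moreover have "eventually (\<lambda>x. c * e ^ m * (deriv ^^ m) f (e * x) = (deriv ^^ m) h x) (at_left (0::real))"
  proof (rule eventually_mono[OF eventually_at_left_real[of "-1" 0]])
    show "(0::real) > -1" by simp
  next
    fix x :: real assume "x \<in> {-1<..<0}"
    then show "c * e ^ m * (deriv ^^ m) f (e * x) = (deriv ^^ m) h x" using eqm[of x] by simp
  qed
  ultimately have "((deriv ^^ m) h \<longlongrightarrow> c * e ^ m * (deriv ^^ m) f 0) (at_left 0)"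
    by (rule Lim_transform_eventually)
  then show ?thesis using l1 tendsto_unique trivial_limit_at_left_real by blast
qed

lemma side_right:
  assumes f: "Cn m f" and h: "continuous_on UNIV ((deriv ^^ m) h)" and e: "e > 0"
    and eq: "\<forall>x>0. h x = c * f (e * x)"
  shows "(deriv ^^ m) h 0 = c * e ^ m * (deriv ^^ m) f 0"
proof -
  have fd: "\<forall>j<m. \<forall>x. (deriv ^^ j) f differentiable at x" and fc: "continuous_on UNIV ((deriv ^^ m) f)"
    using f unfolding Cn_iff by auto
  have eqm: "(deriv ^^ m) h x = c * e ^ m * (deriv ^^ m) f (e * x)" if "x > 0" for x
  proof -
    have "(deriv ^^ m) h x = (deriv ^^ m) (\<lambda>x. c * f (e * x)) x"
      using eq that by (intro deriv_local[where S="{0<..}"]) auto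
    then show ?thesis using deriv_scale[OF fd] by simp
  qed
  have "((deriv ^^ m) h \<longlongrightarrow> (deriv ^^ m) h 0) (at 0)"
    using h by (simp add: continuous_on_eq_continuous_at isContD)
  then have l1: "((deriv ^^ m) h \<longlongrightarrow> (deriv ^^ m) h 0) (at_right 0)"
    using filterlim_at_split by blast
  have "continuous_on UNIV (\<lambda>x. c * e ^ m * (deriv ^^ m) f (e * x))"
    using fc by (intro continuous_intros continuous_on_compose2[OF fc]) auto
  then have "((\<lambda>x. c * e ^ m * (deriv ^^ m) f (e * x)) \<longlongrightarrow> c * e ^ m * (deriv ^^ m) f 0) (at 0)"
    by (metis (no_types, lifting) UNIV_I continuous_on_def mult_zero_right tendsto_within_open open_UNIV)
  then have "((\<lambda>x. c * e ^ m * (deriv ^^ m) f (e * x)) \<longlongrightarrow> c * e ^ m * (deriv ^^ m) f 0) (at_right 0)"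
    using filterlim_at_split by blast
  moreover have "eventually (\<lambda>x. c * e ^ m * (deriv ^^ m) f (e * x) = (deriv ^^ m) h x) (at_right (0::real))"
  proof (rule eventually_mono[OF eventually_at_right_real[of 0 1, OF zero_less_one]])
    fix x :: real assume "x \<in> {0<..<1}"
    then show "c * e ^ m * (deriv ^^ m) f (e * x) = (deriv ^^ m) h x" using eqm[of x] by simp
  qed
  ultimately have "((deriv ^^ m) h \<longlongrightarrow> c * e ^ m * (deriv ^^ m) f 0) (at_right 0)"
    by (rule Lim_transform_eventually)
  then show ?thesis using l1 tendsto_unique trivial_limit_at_right_real by blast
qed

lemma sign_cases:
  assumes f: "Cn 1 f" and nz: "\<forall>x. deriv f x \<noteq> 0"
  shows "(\<forall>x. deriv f x > 0) \<or> (\<forall>x. deriv f x < 0)"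
proof (rule ccontr)
  assume "\<not> ?thesis"
  then obtain x y where x: "deriv f x > 0" and y: "deriv f y < 0"
    using nz by (meson linorder_neqE_linordered_idom)
  have c: "continuous_on S (deriv f)" for S using f by (auto intro: continuous_on_subset)
  have "\<exists>z. deriv f z = 0"
  proof (cases "x \<le> y")
    case True then show ?thesis using IVT2'[of "deriv f" y 0 x, OF _ _ True c] x y by force
  next
    case False then show ?thesis using IVT'[of "deriv f" y 0 x, OF _ _ _ c] x y by force
  qed
  then show False using nz by auto
qed

lemma mono_cases:
  assumes f: "Cn 1 f" and nz: "\<forall>x. deriv f x \<noteq> 0"
  shows "strict_mono f \<or> (\<forall>x y. x < y \<longrightarrow> f y < f x)"
proof -
  have d: "DERIV f x :> deriv f x" for x using f by (auto intro: deriv_at)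
  from sign_cases[OF f nz] show ?thesis
  proof
    assume "\<forall>x. deriv f x > 0"
    then have "strict_mono f" unfolding strict_mono_def
      using d by (metis DERIV_pos_imp_increasing)
    then show ?thesis ..
  next
    assume "\<forall>x. deriv f x < 0"
    then have "\<forall>x y. x < y \<longrightarrow> f y < f x"
      using d by (metis DERIV_neg_imp_decreasing)
    then show ?thesis ..
  qed
qed

lemma Dk_facts:
  assumes "f \<in> Dk k" "k \<ge> 1"
  shows "Cn 1 f" "\<forall>x. deriv f x \<noteq> 0" "\<forall>x. inv f (f x) = x" "\<forall>y. f (inv f y) = y" "f 0 = 0"
    "\<forall>m. enat m \<le> k \<longrightarrow> Cn m f" "continuous_on UNIV (inv f)" "Cn 1 (inv f)"
proof -
  have b: "bij f" and c1: "Ck k f" and c2: "Ck k (inv f)" and z: "f 0 = 0"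
    using assms(1) unfolding Dk_def by auto
  have k1: "enat 1 \<le> k" using assms(2) by (simp add: one_enat_def)
  show A: "\<forall>m. enat m \<le> k \<longrightarrow> Cn m f" using c1 Ck_iff by blast
  show B: "Cn 1 f" using A k1 by blast
  have C: "Cn 1 (inv f)" using c2 Ck_iff k1 by blast
  then show "Cn 1 (inv f)" .
  show "continuous_on UNIV (inv f)" using C Cn_le[of 0 1] by simp
  show D: "\<forall>x. inv f (f x) = x" using b by (simp add: bij_def)
  show "\<forall>y. f (inv f y) = y" using b by (simp add: bij_def surj_f_inv_f)
  show "f 0 = 0" by fact
  show "\<forall>x. deriv f x \<noteq> 0"
    using B C D by (intro allI deriv_nonzero[where u="inv f"]) auto
qed

lemma w_mono: "c > 0 \<Longrightarrow> x < y \<Longrightarrow> w c x < w c y"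
  unfolding w_def by (auto simp: mult_strict_left_mono) (smt (verit) mult_pos_pos)

lemma pow_ne1: "(a::real) > 0 \<Longrightarrow> a \<noteq> 1 \<Longrightarrow> n > 0 \<Longrightarrow> a ^ n \<noteq> 1"
  using power_eq_imp_eq_base[of a n 1] by auto

lemma fwd_inc:
  assumes k: "k \<ge> 1" and ab: "a > 0" "b > 0" "a \<noteq> 1" and h: "h \<in> Dk k" and f: "f \<in> Dk k"
    and hf: "h = w b \<circ> f \<circ> w a" and sm: "strict_mono f"
  shows "a * b = 1" "h \<in> Ek_plus k"
proof -
  note F = Dk_facts[OF f k] and H = Dk_facts[OF h k]
  have left: "\<forall>x<0. h x = 1 * f (1 * x)"
  proof (intro allI impI)
    fix x :: real assume "x < 0"
    then have "f x < f 0" by (rule strict_monoD[OF sm])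
    then show "h x = 1 * f (1 * x)" using \<open>x < 0\<close> F(5) by (simp add: hf w_def)
  qed
  have right: "\<forall>x>0. h x = b * f (a * x)"
  proof (intro allI impI)
    fix x :: real assume "x > 0"
    then have "f 0 < f (a * x)" using strict_monoD[OF sm, of 0 "a*x"] ab by simp
    then show "h x = b * f (a * x)" using \<open>x > 0\<close> F(5) by (simp add: hf w_def)
  qed
  have key: "(deriv ^^ m) f 0 = b * a ^ m * (deriv ^^ m) f 0" if "enat m \<le> k" for m
  proof -
    have cf: "Cn m f" using F(6) that by blast
    have "Cn m h" using H(6) that by blast
    then have ch: "continuous_on UNIV ((deriv ^^ m) h)" unfolding Cn_iff by blast
    have l: "(deriv ^^ m) h 0 = (deriv ^^ m) f 0" using side_left[OF cf ch _ left] by simp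
    have r: "(deriv ^^ m) h 0 = b * a ^ m * (deriv ^^ m) f 0" using side_right[OF cf ch ab(1) right] by simp
    show ?thesis using l r by linarith
  qed
  have "enat 1 \<le> k" using k by (simp add: one_enat_def)
  from key[OF this] F(2) show ab1: "a * b = 1" by (simp add: algebra_simps)
  have hi: "(deriv ^^ i) h 0 = 0" if "2 \<le> i" "enat i \<le> k" for i
  proof -
    obtain j where j: "i = Suc j" using \<open>2 \<le> i\<close> by (cases i) auto
    have "b * a ^ i = (a * b) * a ^ j" unfolding j by (simp add: algebra_simps)
    also have "\<dots> = a ^ j" using ab1 by simp
    finally have c: "b * a ^ i = a ^ j" .
    have "a ^ j \<noteq> 1" using pow_ne1 ab that j by simp
    then have "(deriv ^^ i) f 0 = 0" using key[OF that(2)] c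
      by (cases "(deriv ^^ i) f 0 = 0") auto
    moreover have "(deriv ^^ i) h 0 = 1 * 1 ^ i * (deriv ^^ i) f 0"
    proof (rule side_left[OF _ _ _ left])
      show "Cn i f" using F(6) that(2) by blast
      have "Cn i h" using H(6) that(2) by blast
      then show "continuous_on UNIV ((deriv ^^ i) h)" unfolding Cn_iff by blast
    qed simp
    ultimately show ?thesis by simp
  qed
  have "strict_mono h" unfolding hf strict_mono_def using sm ab
    by (simp add: strict_monoD w_mono)
  then show "h \<in> Ek_plus k" using h hi unfolding Ek_plus_def Ek_def by blast
qed

lemma fwd_dec:
  assumes k: "k \<ge> 1" and ab: "a > 0" "b > 0" "b \<noteq> 1" and h: "h \<in> Dk k" and f: "f \<in> Dk k"
    and hf: "h = w b \<circ> f \<circ> w a" and sm: "\<forall>x y. x < y \<longrightarrow> f y < f x"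
  shows "a = b" "h \<in> Ek_minus k"
proof -
  note F = Dk_facts[OF f k] and H = Dk_facts[OF h k]
  have left: "\<forall>x<0. h x = b * f (1 * x)"
  proof (intro allI impI)
    fix x :: real assume "x < 0"
    then have "f 0 < f x" using sm by (simp add: \<open>x < 0\<close>)
    then show "h x = b * f (1 * x)" using \<open>x < 0\<close> F(5) by (simp add: hf w_def)
  qed
  have right: "\<forall>x>0. h x = 1 * f (a * x)"
  proof (intro allI impI)
    fix x :: real assume "x > 0"
    then have "f (a * x) < f 0" using sm[rule_format, of 0 "a * x"] ab by simp
    then show "h x = 1 * f (a * x)" using \<open>x > 0\<close> F(5) by (simp add: hf w_def)
  qed
  have key: "b * (deriv ^^ m) f 0 = a ^ m * (deriv ^^ m) f 0" if "enat m \<le> k" for m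
  proof -
    have cf: "Cn m f" using F(6) that by blast
    have "Cn m h" using H(6) that by blast
    then have ch: "continuous_on UNIV ((deriv ^^ m) h)" unfolding Cn_iff by blast
    have l: "(deriv ^^ m) h 0 = b * (deriv ^^ m) f 0" using side_left[OF cf ch _ left] by simp
    have r: "(deriv ^^ m) h 0 = a ^ m * (deriv ^^ m) f 0" using side_right[OF cf ch ab(1) right] by simp
    show ?thesis using l r by linarith
  qed
  have "enat 1 \<le> k" using k by (simp add: one_enat_def)
  from key[OF this] F(2) show ab1: "a = b" by simp
  have hi: "(deriv ^^ i) h 0 = 0" if "2 \<le> i" "enat i \<le> k" for i
  proof -
    obtain j where j: "i = Suc j" using \<open>2 \<le> i\<close> by (cases i) auto
    have nj: "b ^ j \<noteq> 1" using pow_ne1 ab that j by simp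
    have "b * (deriv ^^ i) f 0 = b * (b ^ j * (deriv ^^ i) f 0)"
      using key[OF that(2)] ab1 j by (simp add: algebra_simps)
    then have "(deriv ^^ i) f 0 = b ^ j * (deriv ^^ i) f 0" using ab by simp
    then have "(deriv ^^ i) f 0 = 0" using nj
      by (cases "(deriv ^^ i) f 0 = 0") auto
    moreover have "(deriv ^^ i) h 0 = b * 1 ^ i * (deriv ^^ i) f 0"
    proof (rule side_left[OF _ _ _ left])
      show "Cn i f" using F(6) that(2) by blast
      have "Cn i h" using H(6) that(2) by blast
      then show "continuous_on UNIV ((deriv ^^ i) h)" unfolding Cn_iff by blast
    qed simp
    ultimately show ?thesis by simp
  qed
  have "\<forall>x y. x < y \<longrightarrow> h y < h x" unfolding hf using sm ab
    by (simp add: w_mono)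
  then show "h \<in> Ek_minus k" using h hi unfolding Ek_minus_def Ek_def by blast
qed

lemma build:
  assumes k: "k \<ge> 1" and h: "h \<in> Dk k" and hz: "\<forall>i. 2 \<le> i \<and> enat i \<le> k \<longrightarrow> (deriv ^^ i) h 0 = 0"
    and pos: "c1 > 0" "e1 > 0" "c2 > 0" "e2 > 0" and ce: "c1 * e1 = c2 * e2"
    and fdef: "f = (\<lambda>x. if x \<le> 0 then c1 * h (e1 * x) else c2 * h (e2 * x))"
    and gc: "continuous_on UNIV g" and gf: "\<forall>x. g (f x) = x" and fg: "\<forall>y. f (g y) = y"
  shows "f \<in> Dk k"
proof -
  note H = Dk_facts[OF h k]
  have bij: "bij f" using gf fg by (intro o_bij[of g]) (auto simp: fun_eq_iff)
  have invf: "inv f = g" using gf fg by (intro inv_unique_comp) (auto simp: fun_eq_iff)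
  have dscale: "(deriv ^^ j) (\<lambda>x. c * h (e * x)) 0 = c * e ^ j * (deriv ^^ j) h 0" if "enat j \<le> k" for j c e
  proof -
    have "\<forall>i<j. \<forall>x. (deriv ^^ i) h differentiable at x" using H(6) that Cn_iff by blast
    from deriv_scale[OF this, of c e] show ?thesis by simp
  qed
  have Cf: "Cn m f" if mk: "enat m \<le> k" for m
  proof -
    have ch: "Cn m h" using H(6) that by auto
    have "Cn m (\<lambda>x. if x \<le> 0 then c1 * h (e1 * x) else c2 * h (e2 * x))"
    proof (rule glue)
      show "Cn m (\<lambda>x. c1 * h (e1 * x))" by (intro Cn_mult Cn_const Cn_comp[OF ch Cn_lin])
      show "Cn m (\<lambda>x. c2 * h (e2 * x))" by (intro Cn_mult Cn_const Cn_comp[OF ch Cn_lin])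
      show "\<forall>j\<le>m. (deriv ^^ j) (\<lambda>x. c1 * h (e1 * x)) 0 = (deriv ^^ j) (\<lambda>x. c2 * h (e2 * x)) 0"
      proof (intro allI impI)
        fix j assume "j \<le> m"
        then have jk: "enat j \<le> k" using mk order_trans enat_ord_simps(1) by blast
        consider "j = 0" | "j = 1" | "j \<ge> 2" by linarith
        then show "(deriv ^^ j) (\<lambda>x. c1 * h (e1 * x)) 0 = (deriv ^^ j) (\<lambda>x. c2 * h (e2 * x)) 0"
        proof cases
          case 1 then show ?thesis using H(5) by simp
        next
          case 2 then show ?thesis using dscale[OF jk] ce by simp
        next
          case 3 then show ?thesis using dscale[OF jk] hz jk by simp
        qed
      qed
    qed
    then show ?thesis using fdef by simp
  qed
  have k1: "enat 1 \<le> k" using k by (simp add: one_enat_def)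
  have C1: "Cn 1 f" using Cf[OF k1] .
  have hd: "\<forall>x. h differentiable at x" using H(1) by simp
  have nz: "\<forall>x. deriv f x \<noteq> 0"
  proof
    fix x :: real
    consider "x < 0" | "x > 0" | "x = 0" by linarith
    then show "deriv f x \<noteq> 0"
    proof cases
      case 1
      have "(deriv ^^ 1) f x = (deriv ^^ 1) (\<lambda>x. c1 * h (e1 * x)) x"
        using 1 fdef by (intro deriv_local[where S="{..<0}"]) auto
      also have "\<dots> = c1 * e1 * deriv h (e1 * x)" using deriv_scale[of 1 h c1 e1] hd by simp
      finally show ?thesis using H(2) pos by simp
    next
      case 2
      have "(deriv ^^ 1) f x = (deriv ^^ 1) (\<lambda>x. c2 * h (e2 * x)) x"
        using 2 fdef by (intro deriv_local[where S="{0<..}"]) auto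
      also have "\<dots> = c2 * e2 * deriv h (e2 * x)" using deriv_scale[of 1 h c2 e2] hd by simp
      finally show ?thesis using H(2) pos by simp
    next
      case 3
      have "continuous_on UNIV ((deriv ^^ 1) f)" using C1 Cn_iff by blast
      from side_left[OF H(1) this pos(2), of c1] fdef
      have "(deriv ^^ 1) f 0 = c1 * e1 ^ 1 * (deriv ^^ 1) h 0" by simp
      then show ?thesis using 3 H(2) pos by simp
    qed
  qed
  have Cg: "Cn m g" if "enat m \<le> k" for m
  proof (cases m)
    case 0 then show ?thesis using gc by simp
  next
    case (Suc n)
    then show ?thesis using Cn_inv[OF _ gf fg gc nz, of n] Cf[OF that] by (simp del: Cn.simps)
  qed
  have "f 0 = 0" using fdef H(5) by simp
  moreover have "Ck k f" unfolding Ck_iff using Cf by blast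
  moreover have "Ck k (inv f)" unfolding invf Ck_iff using Cg by blast
  ultimately show ?thesis unfolding Dk_def using bij by blast
qed

lemma bwd_plus:
  assumes k: "k \<ge> 1" and ab: "a > 0" "b > 0" "a * b = 1" and hE: "h \<in> Ek_plus k"
  shows "h \<in> Dk k \<inter> wDw k b a"
proof -
  have hD: "h \<in> Dk k" and sm: "strict_mono h"
    and hz: "\<forall>i. 2 \<le> i \<and> enat i \<le> k \<longrightarrow> (deriv ^^ i) h 0 = 0"
    using hE unfolding Ek_plus_def Ek_def by auto
  note H = Dk_facts[OF hD k]
  define u where "u = inv h"
  have hu: "\<And>y. h (u y) = y" and uh: "\<And>x. u (h x) = x" and h0: "h 0 = 0"
    using H unfolding u_def by auto
  have u0: "u 0 = 0" using uh[of 0] h0 by simp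
  have hle: "h x \<le> 0 \<longleftrightarrow> x \<le> 0" for x using strict_mono_less_eq[OF sm, of x 0] h0 by simp
  have ule: "u y \<le> 0 \<longleftrightarrow> y \<le> 0" for y using hle[of "u y"] hu by simp
  define f where "f = (\<lambda>x. if x \<le> 0 then 1 * h (1 * x) else (1 / b) * h ((1 / a) * x))"
  define g where "g = (\<lambda>y. if y \<le> 0 then 1 * u (1 * y) else a * u (b * y))"
  have uc: "Cn 0 u" using H(7) unfolding u_def by simp
  have "Cn 0 g" unfolding g_def
  proof (rule glue)
    show "Cn 0 (\<lambda>y. 1 * u (1 * y))" by (rule Cn_mult[OF Cn_const Cn_comp[OF uc Cn_lin]])
    show "Cn 0 (\<lambda>y. a * u (b * y))" by (rule Cn_mult[OF Cn_const Cn_comp[OF uc Cn_lin]])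
  qed (simp add: u0)
  then have gc: "continuous_on UNIV g" by simp
  have gf: "\<forall>x. g (f x) = x"
  proof
    fix x :: real
    show "g (f x) = x"
    proof (cases "x \<le> 0")
      case True
      then show ?thesis using hle[of x] uh[of x] by (simp add: f_def g_def)
    next
      case False
      then have p: "(1 / a) * x > 0" using ab by simp
      then have "h ((1 / a) * x) > 0" using hle[of "(1 / a) * x"] by simp
      then have fx: "f x = (1 / b) * h ((1 / a) * x)" "f x > 0" using False ab by (simp_all add: f_def)
      have "g (f x) = a * u (b * ((1 / b) * h ((1 / a) * x)))" using fx by (simp add: g_def)
      also have "\<dots> = a * ((1 / a) * x)" using ab uh by simp
      finally show ?thesis using ab by simp
    qed
  qed
  have fg: "\<forall>y. f (g y) = y"
  proof
    fix y :: real
    show "f (g y) = y"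
    proof (cases "y \<le> 0")
      case True
      then show ?thesis using ule[of y] hu[of y] by (simp add: f_def g_def)
    next
      case False
      then have p: "b * y > 0" using ab by simp
      then have "u (b * y) > 0" using ule[of "b * y"] by simp
      then have gy: "g y = a * u (b * y)" "g y > 0" using False ab by (simp_all add: g_def)
      have "f (g y) = (1 / b) * h ((1 / a) * (a * u (b * y)))" using gy by (simp add: f_def)
      also have "\<dots> = (1 / b) * (b * y)" using ab hu by simp
      finally show ?thesis using ab by simp
    qed
  qed
  have fD: "f \<in> Dk k"
    by (rule build[OF k hD hz _ _ _ _ _ f_def gc gf fg]) (use ab in \<open>auto simp: field_simps\<close>)
  have hf: "h = w b \<circ> f \<circ> w a"
  proof
    fix x :: real
    show "h x = (w b \<circ> f \<circ> w a) x"
    proof (cases "x \<le> 0")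
      case True
      then show ?thesis using hle[of x] by (simp add: f_def w_def)
    next
      case False
      then have hx: "h x > 0" using hle[of x] by simp
      have ax: "a * x > 0" using False ab by simp
      have e1: "(1 / a) * (a * x) = x" using ab by simp
      have p: "(1 / b) * h x > 0" using hx ab by simp
      have wa: "w a x = a * x" using False by (simp add: w_def)
      have "f (a * x) = (1 / b) * h ((1 / a) * (a * x))"
        unfolding f_def by (rule if_not_P) (use ax in linarith)
      then have fa: "f (a * x) = (1 / b) * h x" by (simp only: e1)
      have wb: "w b ((1 / b) * h x) = h x" using p ab by (simp add: w_def)
      show ?thesis using wa fa wb by simp
    qed
  qed
  show ?thesis using hD fD hf unfolding wDw_def by blast
qed

lemma bwd_minus:
  assumes k: "k \<ge> 1" and ab: "a > 0" "b > 0" "a = b" and hE: "h \<in> Ek_minus k"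
  shows "h \<in> Dk k \<inter> wDw k b a"
proof -
  have hD: "h \<in> Dk k" and sd: "\<forall>x y. x < y \<longrightarrow> h y < h x"
    and hz: "\<forall>i. 2 \<le> i \<and> enat i \<le> k \<longrightarrow> (deriv ^^ i) h 0 = 0"
    using hE unfolding Ek_minus_def Ek_def by auto
  note H = Dk_facts[OF hD k]
  define u where "u = inv h"
  have hu: "\<And>y. h (u y) = y" and uh: "\<And>x. u (h x) = x" and h0: "h 0 = 0"
    using H unfolding u_def by auto
  have u0: "u 0 = 0" using uh[of 0] h0 by simp
  have hneg: "x > 0 \<Longrightarrow> h x < 0" for x using sd h0 by metis
  have hpos: "x < 0 \<Longrightarrow> h x > 0" for x using sd h0 by metis
  have uneg: "y > 0 \<Longrightarrow> u y < 0" for y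
    using hu[of y] hpos[of "u y"] h0 u0 by (metis linorder_neqE_linordered_idom hneg less_asym)
  have upos: "y < 0 \<Longrightarrow> u y > 0" for y
    using hu[of y] hpos[of "u y"] h0 u0 by (metis linorder_neqE_linordered_idom hneg less_asym)
  define f where "f = (\<lambda>x. if x \<le> 0 then (1 / b) * h (1 * x) else 1 * h ((1 / a) * x))"
  define g where "g = (\<lambda>y. if y \<le> 0 then a * u (1 * y) else 1 * u (b * y))"
  have uc: "Cn 0 u" using H(7) unfolding u_def by simp
  have "Cn 0 g" unfolding g_def
  proof (rule glue)
    show "Cn 0 (\<lambda>y. a * u (1 * y))" by (rule Cn_mult[OF Cn_const Cn_comp[OF uc Cn_lin]])
    show "Cn 0 (\<lambda>y. 1 * u (b * y))" by (rule Cn_mult[OF Cn_const Cn_comp[OF uc Cn_lin]])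
  qed (simp add: u0)
  then have gc: "continuous_on UNIV g" by simp
  have gf: "\<forall>x. g (f x) = x"
  proof
    fix x :: real
    consider "x < 0" | "x = 0" | "x > 0" by linarith
    then show "g (f x) = x"
    proof cases
      case 1
      then have "h x > 0" by (rule hpos)
      then have fx: "f x = (1 / b) * h x" "f x > 0" using 1 ab by (simp_all add: f_def)
      have "g (f x) = u (b * ((1 / b) * h x))" using fx by (simp add: g_def)
      also have "\<dots> = x" using ab uh by simp
      finally show ?thesis .
    next
      case 2 then show ?thesis using h0 u0 by (simp add: f_def g_def)
    next
      case 3
      then have p: "(1 / a) * x > 0" using ab by simp
      then have "h ((1 / a) * x) < 0" by (rule hneg)
      then have fx: "f x = h ((1 / a) * x)" "f x < 0" using 3 by (simp_all add: f_def)
      have "g (f x) = a * u (h ((1 / a) * x))" using fx by (simp add: g_def)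
      also have "\<dots> = x" using ab uh by simp
      finally show ?thesis .
    qed
  qed
  have fg: "\<forall>y. f (g y) = y"
  proof
    fix y :: real
    consider "y < 0" | "y = 0" | "y > 0" by linarith
    then show "f (g y) = y"
    proof cases
      case 1
      then have "u y > 0" by (rule upos)
      then have gy: "g y = a * u y" "g y > 0" using 1 ab by (simp_all add: g_def)
      have "f (g y) = h ((1 / a) * (a * u y))" using gy by (simp add: f_def)
      also have "\<dots> = y" using ab hu by simp
      finally show ?thesis .
    next
      case 2 then show ?thesis using h0 u0 by (simp add: f_def g_def)
    next
      case 3
      then have p: "b * y > 0" using ab by simp
      then have "u (b * y) < 0" by (rule uneg)
      then have gy: "g y = u (b * y)" "g y < 0" using 3 by (simp_all add: g_def)
      have "f (g y) = (1 / b) * h (u (b * y))" using gy by (simp add: f_def)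
      also have "\<dots> = y" using ab hu by simp
      finally show ?thesis .
    qed
  qed
  have fD: "f \<in> Dk k"
    by (rule build[OF k hD hz _ _ _ _ _ f_def gc gf fg]) (use ab in \<open>auto simp: field_simps\<close>)
  have hf: "h = w b \<circ> f \<circ> w a"
  proof
    fix x :: real
    consider "x < 0" | "x = 0" | "x > 0" by linarith
    then show "h x = (w b \<circ> f \<circ> w a) x"
    proof cases
      case 1
      then have "h x > 0" by (rule hpos)
      then have "(1 / b) * h x > 0" using ab by simp
      then show ?thesis using 1 ab by (simp add: f_def w_def)
    next
      case 2 then show ?thesis using h0 by (simp add: f_def w_def)
    next
      case 3
      then have hx: "h x < 0" by (rule hneg)
      have ax: "a * x > 0" using 3 ab by simp
      have e1: "(1 / a) * (a * x) = x" using ab by simp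
      have wa: "w a x = a * x" using 3 by (simp add: w_def)
      have "f (a * x) = 1 * h ((1 / a) * (a * x))"
        unfolding f_def by (rule if_not_P) (use ax in linarith)
      then have fa: "f (a * x) = h x" by (simp only: e1 mult_1)
      have wb: "w b (h x) = h x" using hx by (simp add: w_def)
      show ?thesis using wa fa wb by simp
    qed
  qed
  show ?thesis using hD fD hf unfolding wDw_def by blast
qed

theorem corollary5p17:
  fixes k :: enat and a b :: real
  assumes "k \<ge> 1" and "a > 0" and "b > 0" and "a \<noteq> 1" and "b \<noteq> 1"
  shows "(a \<noteq> b \<and> a \<noteq> 1 / b \<longrightarrow> Dk k \<inter> wDw k b a = {})
       \<and> (a * b = 1 \<longrightarrow> Dk k \<inter> wDw k b a = Ek_plus k)
       \<and> (a = b \<longrightarrow> Dk k \<inter> wDw k b a = Ek_minus k)"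
proof -
  have cases: "(a * b = 1 \<and> h \<in> Ek_plus k) \<or> (a = b \<and> h \<in> Ek_minus k)"
    if hin: "h \<in> Dk k \<inter> wDw k b a" for h
  proof -
    obtain f where h: "h \<in> Dk k" and f: "f \<in> Dk k" and hf: "h = w b \<circ> f \<circ> w a"
      using hin unfolding wDw_def by blast
    note F = Dk_facts[OF f assms(1)]
    from mono_cases[OF F(1) F(2)] show ?thesis
    proof
      assume "strict_mono f"
      from fwd_inc[OF assms(1) assms(2,3,4) h f hf this] show ?thesis by blast
    next
      assume "\<forall>x y. x < y \<longrightarrow> f y < f x"
      from fwd_dec[OF assms(1) assms(2,3,5) h f hf this] show ?thesis by blast
    qed
  qed
  have aa: "a * a \<noteq> 1" using pow_ne1[of a 2] assms by (simp add: power2_eq_square)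
  have ab1: "a * b = 1 \<longleftrightarrow> a = 1 / b" using assms by (auto simp: field_simps)
  show ?thesis
  proof (intro conjI impI)
    assume "a \<noteq> b \<and> a \<noteq> 1 / b"
    then show "Dk k \<inter> wDw k b a = {}" using cases ab1 by blast
  next
    assume e: "a * b = 1"
    show "Dk k \<inter> wDw k b a = Ek_plus k"
    proof
      show "Dk k \<inter> wDw k b a \<subseteq> Ek_plus k" using cases e aa by blast
      show "Ek_plus k \<subseteq> Dk k \<inter> wDw k b a" using bwd_plus[OF assms(1,2,3) e] by blast
    qed
  next
    assume e: "a = b"
    show "Dk k \<inter> wDw k b a = Ek_minus k"
    proof
      show "Dk k \<inter> wDw k b a \<subseteq> Ek_minus k" using cases e aa by blast
      show "Ek_minus k \<subseteq> Dk k \<inter> wDw k b a" using bwd_minus[OF assms(1,2,3) e] by blast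
    qed
  qed
qed

end
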